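(* A forest (undirected) is unary FA-presentable if and only if it can be obtained from a unary FA-presentable directed forest by replacing its edge relation with the symmetric closure of that relation.
   Context: An (undirected) forest is regarded as a structure $(T,\eta)$ with $\eta$ a symmetric irreflexive edge relation whose graph has no cycles; a directed forest is a directed graph obtained from a forest by directing each edge. A structure $(X,\eta)$ is unary FA-presentable if there exist a regular language $L\subseteq a^*$ and a surjection $\phi:L\to X$ such that $\{(u,v)\in L^2:u\phi=v\phi\}$ and $\{(u,v)\in L^2:(u\phi,v\phi)\in\eta\}$ are regular relations (the words $\mathrm{conv}(u,v)$ over $\{a,\$\}^2$, reading $u,v$ in parallel with the shorter padded by $\$$, form regular languages). *)

theory Defs
  imports Main
begin

datatype usym = A

text \<open>Regular languages over an alphabet 'b: accepted by a deterministic finite automaton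
  (finite state set Q, states coded as naturals, total transition function).\<close>
definition regular :: "'b list set \<Rightarrow> bool" where
  "regular L \<longleftrightarrow> (\<exists>(Q::nat set) q0 d F. finite Q \<and> q0 \<in> Q \<and> (\<forall>q\<in>Q. \<forall>x. d q x \<in> Q)
      \<and> F \<subseteq> Q \<and> L = {w. foldl d q0 w \<in> F})"

text \<open>Convolution of two words: read in parallel, the shorter padded with the symbol dollar
  (represented by None).\<close>
definition conv :: "'b list \<Rightarrow> 'b list \<Rightarrow> ('b option \<times> 'b option) list" where
  "conv u v = map (\<lambda>i. (if i < length u then Some (u ! i) else None,
                         if i < length v then Some (v ! i) else None))
                  [0..<max (length u) (length v)]"

definition regular_rel :: "('b list \<times> 'b list) set \<Rightarrow> bool" where
  "regular_rel R \<longleftrightarrow> regular {conv u v | u v. (u, v) \<in> R}"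

definition unary_FA_presentable :: "'a set \<Rightarrow> ('a \<times> 'a) set \<Rightarrow> bool" where
  "unary_FA_presentable X \<eta> \<longleftrightarrow>
     (\<exists>(L :: usym list set) (\<phi> :: usym list \<Rightarrow> 'a).
        regular L \<and> \<phi> ` L = X \<and>
        regular_rel {(u, v). u \<in> L \<and> v \<in> L \<and> \<phi> u = \<phi> v} \<and>
        regular_rel {(u, v). u \<in> L \<and> v \<in> L \<and> (\<phi> u, \<phi> v) \<in> \<eta>})"

definition has_cycle :: "'a set \<Rightarrow> ('a \<times> 'a) set \<Rightarrow> bool" where
  "has_cycle X \<eta> \<longleftrightarrow> (\<exists>xs. length xs \<ge> 3 \<and> distinct xs \<and> set xs \<subseteq> X \<and>
      (\<forall>i < length xs. (xs ! i, xs ! ((i + 1) mod length xs)) \<in> \<eta>))"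

definition forest :: "'a set \<Rightarrow> ('a \<times> 'a) set \<Rightarrow> bool" where
  "forest X \<eta> \<longleftrightarrow> \<eta> \<subseteq> X \<times> X \<and> sym \<eta> \<and> irrefl \<eta> \<and> \<not> has_cycle X \<eta>"

definition directed_forest :: "'a set \<Rightarrow> ('a \<times> 'a) set \<Rightarrow> bool" where
  "directed_forest X \<delta> \<longleftrightarrow> \<delta> \<inter> \<delta>\<inverse> = {} \<and> forest X (\<delta> \<union> \<delta>\<inverse>)"

end

theory Submission
  imports Defs "HOL-Library.Countable_Set"
begin


lemma regularI:
  fixes Q :: "'s set" and d :: "'s \<Rightarrow> 'b \<Rightarrow> 's"
  assumes fin: "finite Q" and q0: "q0 \<in> Q" and cl: "\<And>q x. q \<in> Q \<Longrightarrow> d q x \<in> Q"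
  shows "regular {w. foldl d q0 w \<in> F}"
proof -
  define f where "f = to_nat_on Q"
  define g where "g = inv_into Q f"
  have inj: "inj_on f Q" unfolding f_def by (simp add: fin countable_finite inj_on_to_nat_on)
  have gf: "\<And>q. q \<in> Q \<Longrightarrow> g (f q) = q" unfolding g_def using inj by simp
  define d' where "d' = (\<lambda>n x. f (d (g n) x))"
  have run: "q \<in> Q \<Longrightarrow> foldl d' (f q) w = f (foldl d q w) \<and> foldl d q w \<in> Q" for q w
    by (induction w arbitrary: q) (simp_all add: d'_def gf cl)
  show ?thesis unfolding regular_def
  proof (intro exI conjI)
    show "finite (f ` Q)" using fin by simp
    show "f q0 \<in> f ` Q" using q0 by simp
    show "\<forall>q\<in>f ` Q. \<forall>x. d' q x \<in> f ` Q" by (auto simp: d'_def gf cl)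
    show "f ` (Q \<inter> F) \<subseteq> f ` Q" by auto
    show "{w. foldl d q0 w \<in> F} = {w. foldl d' (f q0) w \<in> f ` (Q \<inter> F)}"
      using run[OF q0] inj q0 by (auto simp: inj_on_image_mem_iff)
  qed
qed

lemma regularE:
  assumes "regular L"
  obtains Q q0 and d :: "nat \<Rightarrow> 'b \<Rightarrow> nat" and F where "finite Q" "q0 \<in> Q"
    "\<And>q x. q \<in> Q \<Longrightarrow> d q x \<in> Q" "L = {w. foldl d q0 w \<in> F}"
  using assms unfolding regular_def by blast

lemma foldl_closed: "(\<And>q x. q \<in> Q \<Longrightarrow> d q x \<in> Q) \<Longrightarrow> q \<in> Q \<Longrightarrow> foldl d q w \<in> Q"
  by (induction w arbitrary: q) auto

lemma regular_Int: assumes "regular S1" "regular S2" shows "regular (S1 \<inter> S2)"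
proof -
  obtain Q1 q1 and d1 :: "nat \<Rightarrow> 'a \<Rightarrow> nat" and F1 where a: "finite Q1" "q1 \<in> Q1"
    "\<And>q x. q \<in> Q1 \<Longrightarrow> d1 q x \<in> Q1" "S1 = {w. foldl d1 q1 w \<in> F1}" using regularE[OF assms(1)] by blast
  obtain Q2 q2 and d2 :: "nat \<Rightarrow> 'a \<Rightarrow> nat" and F2 where b: "finite Q2" "q2 \<in> Q2"
    "\<And>q x. q \<in> Q2 \<Longrightarrow> d2 q x \<in> Q2" "S2 = {w. foldl d2 q2 w \<in> F2}" using regularE[OF assms(2)] by blast
  define d where "d = (\<lambda>(p,q) x. (d1 p x, d2 q x))"
  have run: "foldl d (p,q) w = (foldl d1 p w, foldl d2 q w)" for p q w
    by (induction w arbitrary: p q) (simp_all add: d_def)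
  have "regular {w. foldl d (q1,q2) w \<in> F1 \<times> F2}"
    by (rule regularI[where Q="Q1 \<times> Q2"]) (auto simp: a b d_def)
  moreover have "{w. foldl d (q1,q2) w \<in> F1 \<times> F2} = S1 \<inter> S2" by (auto simp: run a b)
  ultimately show ?thesis by simp
qed

lemma regular_Compl: assumes "regular S1" shows "regular (- S1)"
proof -
  obtain Q1 q1 and d1 :: "nat \<Rightarrow> 'a \<Rightarrow> nat" and F1 where a: "finite Q1" "q1 \<in> Q1"
    "\<And>q x. q \<in> Q1 \<Longrightarrow> d1 q x \<in> Q1" "S1 = {w. foldl d1 q1 w \<in> F1}" using regularE[OF assms(1)] by blast
  have "regular {w. foldl d1 q1 w \<in> - F1}" by (rule regularI[where Q=Q1]) (auto simp: a)
  moreover have "{w. foldl d1 q1 w \<in> - F1} = - S1" by (auto simp: a)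
  ultimately show ?thesis by simp
qed

lemma regular_Un: assumes "regular S1" "regular S2" shows "regular (S1 \<union> S2)"
proof -
  have "S1 \<union> S2 = - (- S1 \<inter> - S2)" by auto
  thus ?thesis using assms by (simp only:) (intro regular_Compl regular_Int)
qed

lemma regular_vimage: assumes "regular S1" shows "regular {w. concat (map h w) \<in> S1}"
proof -
  obtain Q1 q1 and d1 :: "nat \<Rightarrow> 'a \<Rightarrow> nat" and F1 where a: "finite Q1" "q1 \<in> Q1"
    "\<And>q x. q \<in> Q1 \<Longrightarrow> d1 q x \<in> Q1" "S1 = {w. foldl d1 q1 w \<in> F1}" using regularE[OF assms(1)] by blast
  define d where "d = (\<lambda>q x. foldl d1 q (h x))"
  have run: "foldl d q w = foldl d1 q (concat (map h w))" for q w
    by (induction w arbitrary: q) (simp_all add: d_def)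
  have "regular {w. foldl d q1 w \<in> F1}"
    by (rule regularI[where Q=Q1]) (auto simp: a d_def intro: foldl_closed)
  moreover have "{w. foldl d q1 w \<in> F1} = {w. concat (map h w) \<in> S1}" by (auto simp: run a)
  ultimately show ?thesis by simp
qed

lemma regular_map: assumes "regular S1" shows "regular {w. map h w \<in> S1}"
  using regular_vimage[OF assms, of "\<lambda>x. [h x]"] by simp

lemma length_conv[simp]: "length (conv u v) = max (length u) (length v)"
  by (simp add: conv_def)

lemma nth_conv: "i < max (length u) (length v) \<Longrightarrow> conv u v ! i =
   (if i < length u then Some (u ! i) else None, if i < length v then Some (v ! i) else None)"
  by (simp add: conv_def)

lemma conv_Cons: "conv (a#u) (b#v) = (Some a, Some b) # conv u v"
  by (rule nth_equalityI) (auto simp: nth_conv nth_Cons split: nat.splits)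

lemma conv_Nil1: "conv [] v = map (\<lambda>b. (None, Some b)) v"
  by (rule nth_equalityI) (auto simp: nth_conv)

lemma conv_Nil2: "conv u [] = map (\<lambda>a. (Some a, None)) u"
  by (rule nth_equalityI) (auto simp: nth_conv)

definition unc1 :: "('b option \<times> 'b option) list \<Rightarrow> 'b list" where
  "unc1 w = concat (map (\<lambda>p. case fst p of None \<Rightarrow> [] | Some c \<Rightarrow> [c]) w)"
definition unc2 :: "('b option \<times> 'b option) list \<Rightarrow> 'b list" where
  "unc2 w = concat (map (\<lambda>p. case snd p of None \<Rightarrow> [] | Some c \<Rightarrow> [c]) w)"

lemma unc_conv: "unc1 (conv u v) = u \<and> unc2 (conv u v) = v"
proof (induction u arbitrary: v)
  case Nil thus ?case by (simp add: conv_Nil1 unc1_def unc2_def comp_def)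
next
  case (Cons a u) thus ?case
    by (cases v) (simp_all add: conv_Cons conv_Nil2 unc1_def unc2_def comp_def)
qed

lemma conv_inj: "conv u v = conv u' v' \<Longrightarrow> u = u' \<and> v = v'"
  by (metis unc_conv)

lemma map_swap_conv: "map prod.swap (conv u v) = conv v u"
  by (rule nth_equalityI) (auto simp: nth_conv)

lemma regular_rel_converse: assumes "regular_rel R" shows "regular_rel (R\<inverse>)"
proof -
  have eq: "{conv u v |u v. (u, v) \<in> R\<inverse>} = {w. map prod.swap w \<in> {conv u v |u v. (u, v) \<in> R}}"
  proof safe
    fix w u v assume "map prod.swap w = conv u v" "(u,v) \<in> R"
    hence "w = conv v u" by (metis map_swap_conv swap_swap map_map comp_def map_idI)
    thus "\<exists>u v. w = conv u v \<and> (u, v) \<in> R\<inverse>" using \<open>(u,v) \<in> R\<close> by blast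
  qed (auto simp: map_swap_conv)
  show ?thesis unfolding regular_rel_def eq by (rule regular_map) (rule assms[unfolded regular_rel_def])
qed

lemma regular_rel_Un: "regular_rel R \<Longrightarrow> regular_rel S \<Longrightarrow> regular_rel (R \<union> S)"
  unfolding regular_rel_def
  by (drule (1) regular_Un) (simp add: Collect_disj_eq[symmetric] conj_disj_distribL ex_disj_distrib
      setcompr_eq_image)



lemma regular_lastNone: "regular {w :: ('b option \<times> 'c) list. w \<noteq> [] \<and> fst (last w) = None}"
proof -
  define d :: "nat \<Rightarrow> ('b option \<times> 'c) \<Rightarrow> nat" where "d = (\<lambda>q x. if fst x = None then 1 else 2)"
  have run: "foldl d q w = (if w = [] then q else if fst (last w) = None then 1 else 2)" for q w
    by (induction w arbitrary: q) (auto simp: d_def)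
  have "regular {w. foldl d 0 w \<in> {1}}" by (rule regularI[where Q="{0,1,2}"]) (auto simp: d_def)
  moreover have "{w. foldl d 0 w \<in> {1}} = {w. w \<noteq> [] \<and> fst (last w) = None}" by (auto simp: run)
  ultimately show ?thesis by simp
qed

lemma conv_lastNone: "(conv u v \<noteq> [] \<and> fst (last (conv u v)) = None) \<longleftrightarrow> length u < length v"
proof (cases "conv u v = []")
  case True thus ?thesis by (metis length_0_conv length_conv max_0L less_irrefl not_less_zero max_def)
next
  case False
  hence "max (length u) (length v) > 0" by (metis length_conv length_greater_0_conv)
  thus ?thesis using False by (auto simp: last_conv_nth nth_conv max_def split: if_splits) (cases v, auto)
qed

lemma usym_rep: "(u::usym list) = replicate (length u) A"
proof (induction u)
  case (Cons x u) thus ?case by (cases x) simp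
qed simp

lemma conv_rep: "n \<le> m \<Longrightarrow> conv (replicate m A) (replicate n A) =
   replicate n (Some A, Some A) @ replicate (m - n) (Some A, None)"
  by (rule nth_equalityI) (auto simp: nth_conv nth_append)

lemma regular_proj:
  assumes "regular K"
  shows "regular {u :: usym list. \<exists>v. length v < length u \<and> conv u v \<in> K}"
proof -
  obtain Q q0 and D :: "nat \<Rightarrow> (usym option \<times> usym option) \<Rightarrow> nat" and F where a: "finite Q" "q0 \<in> Q"
    "\<And>q x. q \<in> Q \<Longrightarrow> D q x \<in> Q" "K = {w. foldl D q0 w \<in> F}" using regularE[OF assms] by blast
  define AA where "AA = (Some A, Some A)"
  define AN where "AN = (Some A, None :: usym option)"
  define D' where "D' = (\<lambda>(p, T) (x::usym). (D p AA, (\<lambda>t. D t AN) ` (insert p T)))"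
  define T where "T m = {foldl D q0 (replicate n AA @ replicate (m - n) AN) | n. n < m}" for m
  have run: "foldl D' (q0, {}) (replicate m A) = (foldl D q0 (replicate m AA), T m)" for m
  proof (induction m)
    case 0 thus ?case by (simp add: T_def)
  next
    case (Suc m)
    have "replicate (Suc m) A = replicate m A @ [A]" by (simp add: replicate_append_same)
    hence "foldl D' (q0, {}) (replicate (Suc m) A) =
       (D (foldl D q0 (replicate m AA)) AA, (\<lambda>t. D t AN) ` (insert (foldl D q0 (replicate m AA)) (T m)))"
      using Suc by (simp add: D'_def)
    moreover have "foldl D q0 (replicate (Suc m) AA) = D (foldl D q0 (replicate m AA)) AA"
      by (simp flip: replicate_append_same)
    moreover have "(\<lambda>t. D t AN) ` (insert (foldl D q0 (replicate m AA)) (T m)) = T (Suc m)"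
    proof -
      have k: "n \<le> m \<Longrightarrow> foldl D q0 (replicate n AA @ replicate (Suc m - n) AN) =
                D (foldl D q0 (replicate n AA @ replicate (m - n) AN)) AN" for n
      proof -
        assume "n \<le> m"
        hence "Suc m - n = Suc (m - n)" by simp
        thus ?thesis by (simp flip: replicate_append_same)
      qed
      show ?thesis
      proof safe
        show "D (foldl D q0 (replicate m AA)) AN \<in> T (Suc m)"
          unfolding T_def using k[of m] by (auto intro!: exI[of _ m])
      next
        fix t assume "t \<in> T m"
        then obtain n where "n < m" "t = foldl D q0 (replicate n AA @ replicate (m - n) AN)"
          unfolding T_def by blast
        thus "D t AN \<in> T (Suc m)" unfolding T_def using k[of n] by (auto intro!: exI[of _ n])
      next
        fix t assume "t \<in> T (Suc m)"
        then obtain n where n: "n < Suc m" "t = foldl D q0 (replicate n AA @ replicate (Suc m - n) AN)"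
          unfolding T_def by blast
        show "t \<in> (\<lambda>t. D t AN) ` insert (foldl D q0 (replicate m AA)) (T m)"
        proof (cases "n = m")
          case True thus ?thesis using n k[of m] by simp
        next
          case False
          hence "n < m" using n by simp
          thus ?thesis using n k[of n] unfolding T_def by auto
        qed
      qed
    qed
    ultimately show ?case by simp
  qed
  have "regular {w. foldl D' (q0, {}) w \<in> {(p, S). S \<inter> F \<noteq> {}}}"
    by (rule regularI[where Q="Q \<times> Pow Q"]) (auto simp: a D'_def)
  moreover have "{w. foldl D' (q0, {}) w \<in> {(p, S). S \<inter> F \<noteq> {}}} =
      {u :: usym list. \<exists>v. length v < length u \<and> conv u v \<in> K}"
  proof (intro equalityI subsetI)
    fix u :: "usym list" assume "u \<in> {w. foldl D' (q0, {}) w \<in> {(p, S). S \<inter> F \<noteq> {}}}"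
    hence "T (length u) \<inter> F \<noteq> {}" using run[of "length u"] usym_rep[of u] by simp
    then obtain n where "n < length u" "foldl D q0 (replicate n AA @ replicate (length u - n) AN) \<in> F"
      unfolding T_def by blast
    hence "conv u (replicate n A) \<in> K"
      using conv_rep[of n "length u"] usym_rep[of u] a(4) unfolding AA_def AN_def
      by (metis less_imp_le mem_Collect_eq)
    thus "u \<in> {u :: usym list. \<exists>v. length v < length u \<and> conv u v \<in> K}" using \<open>n < length u\<close> by force
  next
    fix u :: "usym list" assume "u \<in> {u :: usym list. \<exists>v. length v < length u \<and> conv u v \<in> K}"
    then obtain v where "length v < length u" "conv u v \<in> K" by blast
    hence "foldl D q0 (replicate (length v) AA @ replicate (length u - length v) AN) \<in> F"
      using conv_rep[of "length v" "length u"] usym_rep[of u] usym_rep[of v] a(4)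
      unfolding AA_def AN_def by (metis less_imp_le mem_Collect_eq)
    hence "T (length u) \<inter> F \<noteq> {}" using \<open>length v < length u\<close> unfolding T_def by blast
    thus "u \<in> {w. foldl D' (q0, {}) w \<in> {(p, S). S \<inter> F \<noteq> {}}}"
      using run[of "length u"] usym_rep[of u] by simp
  qed
  ultimately show ?thesis by simp
qed



lemma regular_rel_restrict:
  assumes "regular_rel R" "regular W" "\<And>u v. conv u v \<in> W \<longleftrightarrow> P u v"
  shows "regular_rel {(u,v). (u,v) \<in> R \<and> P u v}"
proof -
  have "{conv u v |u v. (u,v) \<in> {(u,v). (u,v) \<in> R \<and> P u v}} = {conv u v |u v. (u,v) \<in> R} \<inter> W"
    using assms(3) by auto
  thus ?thesis using assms(1,2) unfolding regular_rel_def by (simp add: regular_Int)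
qed

lemma regular_unc1: "regular S \<Longrightarrow> regular {w. unc1 w \<in> S}"
  unfolding unc1_def by (rule regular_vimage)
lemma regular_unc2: "regular S \<Longrightarrow> regular {w. unc2 w \<in> S}"
  unfolding unc2_def by (rule regular_vimage)

lemma usym_eq_len: "length (u::usym list) = length v \<Longrightarrow> u = v"
  by (metis usym_rep)

theorem theorem6p13:
  fixes X :: "'a set" and \<eta> :: "('a \<times> 'a) set"
  assumes "forest X \<eta>"
  shows "unary_FA_presentable X \<eta> \<longleftrightarrow>
    (\<exists>\<delta>. directed_forest X \<delta> \<and> \<delta> \<union> \<delta>\<inverse> = \<eta> \<and> unary_FA_presentable X \<delta>)"
proof
  assume "\<exists>\<delta>. directed_forest X \<delta> \<and> \<delta> \<union> \<delta>\<inverse> = \<eta> \<and> unary_FA_presentable X \<delta>"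
  then obtain \<delta> L and \<phi> :: "usym list \<Rightarrow> 'a" where h: "\<delta> \<union> \<delta>\<inverse> = \<eta>" "regular L" "\<phi> ` L = X"
    "regular_rel {(u, v). u \<in> L \<and> v \<in> L \<and> \<phi> u = \<phi> v}"
    "regular_rel {(u, v). u \<in> L \<and> v \<in> L \<and> (\<phi> u, \<phi> v) \<in> \<delta>}"
    unfolding unary_FA_presentable_def by blast
  have "{(u, v). u \<in> L \<and> v \<in> L \<and> (\<phi> u, \<phi> v) \<in> \<eta>} =
     {(u, v). u \<in> L \<and> v \<in> L \<and> (\<phi> u, \<phi> v) \<in> \<delta>} \<union> {(u, v). u \<in> L \<and> v \<in> L \<and> (\<phi> u, \<phi> v) \<in> \<delta>}\<inverse>"
    using h(1) by auto
  hence "regular_rel {(u, v). u \<in> L \<and> v \<in> L \<and> (\<phi> u, \<phi> v) \<in> \<eta>}"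
    using h(5) by (simp add: regular_rel_Un regular_rel_converse)
  thus "unary_FA_presentable X \<eta>" unfolding unary_FA_presentable_def using h by blast
next
  assume "unary_FA_presentable X \<eta>"
  then obtain L and \<phi> :: "usym list \<Rightarrow> 'a" where h: "regular L" "\<phi> ` L = X"
    "regular_rel {(u, v). u \<in> L \<and> v \<in> L \<and> \<phi> u = \<phi> v}"
    "regular_rel {(u, v). u \<in> L \<and> v \<in> L \<and> (\<phi> u, \<phi> v) \<in> \<eta>}"
    unfolding unary_FA_presentable_def by blast
  have fo: "\<eta> \<subseteq> X \<times> X" "sym \<eta>" "irrefl \<eta>" using assms unfolding forest_def by auto
  define CE where "CE = {conv u v |u v. (u,v) \<in> {(u, v). u \<in> L \<and> v \<in> L \<and> \<phi> u = \<phi> v}}"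
  define P where "P = {u :: usym list. \<exists>v. length v < length u \<and> conv u v \<in> CE}"
  define L' where "L' = L \<inter> - P"
  have regL': "regular L'" unfolding L'_def P_def
    using h(1) h(3) unfolding regular_rel_def CE_def
    by (intro regular_Int regular_Compl regular_proj)
  have L'_iff: "u \<in> L' \<longleftrightarrow> u \<in> L \<and> (\<forall>v\<in>L. \<phi> v = \<phi> u \<longrightarrow> length u \<le> length v)" for u
  proof -
    have Piff: "u \<in> P \<longleftrightarrow> u \<in> L \<and> (\<exists>v\<in>L. \<phi> v = \<phi> u \<and> length v < length u)"
    proof
      assume "u \<in> P"
      then obtain v u1 v1 where "length v < length u" "conv u v = conv u1 v1" "u1 \<in> L" "v1 \<in> L" "\<phi> u1 = \<phi> v1"
        unfolding P_def CE_def by blast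
      moreover from conv_inj[OF this(2)] have "u = u1" "v = v1" by auto
      ultimately show "u \<in> L \<and> (\<exists>v\<in>L. \<phi> v = \<phi> u \<and> length v < length u)" by auto
    next
      assume "u \<in> L \<and> (\<exists>v\<in>L. \<phi> v = \<phi> u \<and> length v < length u)"
      thus "u \<in> P" unfolding P_def CE_def by fastforce
    qed
    show ?thesis unfolding L'_def by (auto simp: Piff not_le)
  qed
  have uniq: "u \<in> L' \<Longrightarrow> v \<in> L' \<Longrightarrow> \<phi> u = \<phi> v \<Longrightarrow> u = v" for u v
    unfolding L'_iff by (metis usym_eq_len le_antisym)
  have ex: "x \<in> X \<Longrightarrow> \<exists>u\<in>L'. \<phi> u = x" for x
  proof -
    assume "x \<in> X"
    then obtain u0 where "u0 \<in> L" "\<phi> u0 = x" using h(2) by blast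
    hence "(\<lambda>u. u \<in> L \<and> \<phi> u = x) u0" by simp
    from ex_has_least_nat[of "\<lambda>u. u \<in> L \<and> \<phi> u = x", OF this, of length]
    obtain u where u: "u \<in> L" "\<phi> u = x" "\<forall>v. v \<in> L \<and> \<phi> v = x \<longrightarrow> length u \<le> length v"
      by blast
    have "u \<in> L'" unfolding L'_iff using u by blast
    thus ?thesis using u(2) by blast
  qed
  have imgL': "\<phi> ` L' = X"
  proof
    show "\<phi> ` L' \<subseteq> X" using h(2) unfolding L'_def by blast
    show "X \<subseteq> \<phi> ` L'" using ex by blast
  qed
  define \<delta> where "\<delta> = {(x,y). (x,y) \<in> \<eta> \<and> (\<exists>u v. u \<in> L' \<and> v \<in> L' \<and> \<phi> u = x \<and> \<phi> v = y \<and> length u < length v)}"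
  have dis: "\<delta> \<inter> \<delta>\<inverse> = {}"
  proof (rule ccontr)
    assume "\<delta> \<inter> \<delta>\<inverse> \<noteq> {}"
    then obtain x y where xy: "(x,y) \<in> \<delta>" "(y,x) \<in> \<delta>" by auto
    from xy(1) have "\<exists>u v. u \<in> L' \<and> v \<in> L' \<and> \<phi> u = x \<and> \<phi> v = y \<and> length u < length v"
      unfolding \<delta>_def by simp
    then obtain u v where "u \<in> L'" "v \<in> L'" "\<phi> u = x" "\<phi> v = y" "length u < length v" by blast
    from xy(2) have "\<exists>u v. u \<in> L' \<and> v \<in> L' \<and> \<phi> u = y \<and> \<phi> v = x \<and> length u < length v"
      unfolding \<delta>_def by simp
    then obtain u' v' where "u' \<in> L'" "v' \<in> L'" "\<phi> u' = y" "\<phi> v' = x" "length u' < length v'" by blast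
    have "u = v'" "v = u'" using uniq \<open>u \<in> L'\<close> \<open>v \<in> L'\<close> \<open>u' \<in> L'\<close> \<open>v' \<in> L'\<close>
      \<open>\<phi> u = x\<close> \<open>\<phi> v = y\<close> \<open>\<phi> u' = y\<close> \<open>\<phi> v' = x\<close> by auto
    thus False using \<open>length u < length v\<close> \<open>length u' < length v'\<close> by simp
  qed
  have un: "\<delta> \<union> \<delta>\<inverse> = \<eta>"
  proof
    show "\<delta> \<union> \<delta>\<inverse> \<subseteq> \<eta>" using fo(2) unfolding \<delta>_def sym_def by auto
  next
    show "\<eta> \<subseteq> \<delta> \<union> \<delta>\<inverse>"
    proof
      fix p assume "p \<in> \<eta>"
      then obtain x y where p: "p = (x,y)" "(x,y) \<in> \<eta>" by (cases p) auto
      hence "x \<in> X" "y \<in> X" "x \<noteq> y" "(y,x) \<in> \<eta>" using fo unfolding irrefl_def sym_def by auto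
      obtain u where u: "u \<in> L'" "\<phi> u = x" using ex[OF \<open>x \<in> X\<close>] by blast
      obtain v where v: "v \<in> L'" "\<phi> v = y" using ex[OF \<open>y \<in> X\<close>] by blast
      have "length u \<noteq> length v"
      proof
        assume "length u = length v"
        hence "u = v" by (rule usym_eq_len)
        thus False using u v \<open>x \<noteq> y\<close> by simp
      qed
      hence "length u < length v \<or> length v < length u" by arith
      thus "p \<in> \<delta> \<union> \<delta>\<inverse>"
      proof
        assume "length u < length v"
        hence "(x,y) \<in> \<delta>" unfolding \<delta>_def using u v p(2) by auto
        thus ?thesis using p(1) by simp
      next
        assume "length v < length u"
        hence "(y,x) \<in> \<delta>" unfolding \<delta>_def using u v \<open>(y,x) \<in> \<eta>\<close> by auto
        thus ?thesis using p(1) by simp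
      qed
    qed
  qed
  have df: "directed_forest X \<delta>" unfolding directed_forest_def using dis un assms by simp
  have L'L: "L' \<subseteq> L" unfolding L'_def by auto
  have e1: "{(u, v). u \<in> L' \<and> v \<in> L' \<and> \<phi> u = \<phi> v} =
     {(u,v). (u,v) \<in> {(u, v). u \<in> L \<and> v \<in> L \<and> \<phi> u = \<phi> v} \<and> (u \<in> L' \<and> v \<in> L')}"
    using L'L by auto
  have r1: "regular_rel {(u, v). u \<in> L' \<and> v \<in> L' \<and> \<phi> u = \<phi> v}"
    unfolding e1
    by (rule regular_rel_restrict[OF h(3) regular_Int[OF regular_unc1[OF regL'] regular_unc2[OF regL']]])
      (simp add: unc_conv)
  have e2: "{(u, v). u \<in> L' \<and> v \<in> L' \<and> (\<phi> u, \<phi> v) \<in> \<delta>} =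
     {(u,v). (u,v) \<in> {(u, v). u \<in> L \<and> v \<in> L \<and> (\<phi> u, \<phi> v) \<in> \<eta>} \<and> ((u \<in> L' \<and> v \<in> L') \<and> length u < length v)}"
  proof (intro equalityI subsetI)
    fix p assume "p \<in> {(u, v). u \<in> L' \<and> v \<in> L' \<and> (\<phi> u, \<phi> v) \<in> \<delta>}"
    then obtain u v where p: "p = (u,v)" "u \<in> L'" "v \<in> L'" "(\<phi> u, \<phi> v) \<in> \<delta>" by blast
    hence "(\<phi> u, \<phi> v) \<in> \<eta> \<and> (\<exists>u1 v1. u1 \<in> L' \<and> v1 \<in> L' \<and> \<phi> u1 = \<phi> u \<and> \<phi> v1 = \<phi> v \<and> length u1 < length v1)"
      unfolding \<delta>_def by simp
    then obtain u1 v1 where "(\<phi> u, \<phi> v) \<in> \<eta>" "u1 \<in> L'" "v1 \<in> L'" "\<phi> u1 = \<phi> u" "\<phi> v1 = \<phi> v"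
      "length u1 < length v1" by blast
    moreover have "u1 = u" "v1 = v" using uniq p calculation by auto
    ultimately show "p \<in> {(u,v). (u,v) \<in> {(u, v). u \<in> L \<and> v \<in> L \<and> (\<phi> u, \<phi> v) \<in> \<eta>} \<and> ((u \<in> L' \<and> v \<in> L') \<and> length u < length v)}"
      using p L'L by auto
  next
    fix p assume "p \<in> {(u,v). (u,v) \<in> {(u, v). u \<in> L \<and> v \<in> L \<and> (\<phi> u, \<phi> v) \<in> \<eta>} \<and> ((u \<in> L' \<and> v \<in> L') \<and> length u < length v)}"
    then obtain u v where p: "p = (u,v)" "u \<in> L'" "v \<in> L'" "(\<phi> u, \<phi> v) \<in> \<eta>" "length u < length v" by blast
    hence "(\<phi> u, \<phi> v) \<in> \<delta>" unfolding \<delta>_def by blast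
    thus "p \<in> {(u, v). u \<in> L' \<and> v \<in> L' \<and> (\<phi> u, \<phi> v) \<in> \<delta>}" using p by blast
  qed
  have r2: "regular_rel {(u, v). u \<in> L' \<and> v \<in> L' \<and> (\<phi> u, \<phi> v) \<in> \<delta>}"
    unfolding e2
    by (rule regular_rel_restrict[OF h(4) regular_Int[OF regular_Int[OF regular_unc1[OF regL'] regular_unc2[OF regL']] regular_lastNone]])
      (simp add: unc_conv conv_lastNone)
  have "unary_FA_presentable X \<delta>" unfolding unary_FA_presentable_def
    using regL' imgL' r1 r2 by blast
  thus "\<exists>\<delta>. directed_forest X \<delta> \<and> \<delta> \<union> \<delta>\<inverse> = \<eta> \<and> unary_FA_presentable X \<delta>"
    using df un by blast
qed

end
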